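(* Let $A$ be a ring and $\mathfrak{I}$ an ideal of $A$ such that $A$ is separated and complete for the $\mathfrak{I}$-adic topology. Let ${}^*A$ be the ultrapower of $A$ with respect to a nonprincipal ultrafilter on $\mathbb{N}$ and $\mu(0):=\bigcap_{n>0}{}^*(\mathfrak{I}^n)$. Then: (i) $\varprojlim_n{}^*A/{}^*(\mathfrak{I}^{n+1})\cong{}^*A/\mu(0)$; (ii) there is a natural injective ring homomorphism $\widehat{A}\hookrightarrow{}^*A/\mu(0)$; (iii) this homomorphism is an isomorphism $\widehat{A}\cong{}^*A/\mu(0)$ if and only if $A/\mathfrak{I}^{n+1}$ is finite for every $n\in\mathbb{N}$.
   Context: $\widehat{A}=\varprojlim_n A/\mathfrak{I}^{n+1}$ is the $\mathfrak{I}$-adic completion (isomorphic to $A$ by assumption). ${}^*(\mathfrak{I}^n)$ denotes the nonstandard extension (ultrapower) of the ideal $\mathfrak{I}^n$, an ideal of ${}^*A$; the map in (ii) is induced by the diagonal embedding $A\to{}^*A$. *)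

theory Defs
  imports "HOL-Algebra.Algebra"
begin

fun ideal_pow :: "('a, 'm) ring_scheme \<Rightarrow> 'a set \<Rightarrow> nat \<Rightarrow> 'a set" where
  "ideal_pow A I 0 = carrier A"
| "ideal_pow A I (Suc n) = ideal_prod A I (ideal_pow A I n)"

definition adic_separated :: "('a, 'm) ring_scheme \<Rightarrow> 'a set \<Rightarrow> bool" where
  "adic_separated A I \<longleftrightarrow> (\<Inter>n. ideal_pow A I n) = {\<zero>\<^bsub>A\<^esub>}"

definition adic_complete :: "('a, 'm) ring_scheme \<Rightarrow> 'a set \<Rightarrow> bool" where
  "adic_complete A I \<longleftrightarrow>
     (\<forall>x :: nat \<Rightarrow> 'a. (\<forall>k. x k \<in> carrier A) \<longrightarrow>
        (\<forall>n. \<exists>N. \<forall>m\<ge>N. \<forall>k\<ge>N. x m \<ominus>\<^bsub>A\<^esub> x k \<in> ideal_pow A I n) \<longrightarrow>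
        (\<exists>a\<in>carrier A. \<forall>n. \<exists>N. \<forall>m\<ge>N. x m \<ominus>\<^bsub>A\<^esub> a \<in> ideal_pow A I n))"

definition free_ultrafilter_nat :: "nat filter \<Rightarrow> bool" where
  "free_ultrafilter_nat U \<longleftrightarrow>
     U \<noteq> bot \<and> (\<forall>P. eventually P U \<or> eventually (\<lambda>n. \<not> P n) U) \<and>
     (\<forall>S. finite S \<longrightarrow> \<not> eventually (\<lambda>n. n \<in> S) U)"

text \<open>Inverse limit of a tower of quotient rings R 0 <- R 1 <- ..., where R n is a quotient
  by an ideal J n with J (n+1) contained in J n; the transition map sends a coset of J (n+1)
  to the unique coset of J n containing it, so compatibility means f (Suc n) \<subseteq> f n.\<close>
definition coset_limit :: "(nat \<Rightarrow> 'b set ring) \<Rightarrow> (nat \<Rightarrow> 'b set) ring" where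
  "coset_limit R = \<lparr> carrier = {f. (\<forall>n. f n \<in> carrier (R n)) \<and> (\<forall>n. f (Suc n) \<subseteq> f n)},
                     monoid.mult = (\<lambda>f g n. f n \<otimes>\<^bsub>R n\<^esub> g n),
                     monoid.one = (\<lambda>n. \<one>\<^bsub>R n\<^esub>),
                     ring.zero = (\<lambda>n. \<zero>\<^bsub>R n\<^esub>),
                     ring.add = (\<lambda>f g n. f n \<oplus>\<^bsub>R n\<^esub> g n) \<rparr>"

definition adic_completion :: "('a, 'm) ring_scheme \<Rightarrow> 'a set \<Rightarrow> (nat \<Rightarrow> 'a set) ring" where
  "adic_completion A I = coset_limit (\<lambda>n. A Quot ideal_pow A I (Suc n))"

definition adic_canon :: "('a, 'm) ring_scheme \<Rightarrow> 'a set \<Rightarrow> 'a \<Rightarrow> (nat \<Rightarrow> 'a set)" where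
  "adic_canon A I a = (\<lambda>n. ideal_pow A I (Suc n) +>\<^bsub>A\<^esub> a)"

definition seq_ring :: "('a, 'm) ring_scheme \<Rightarrow> (nat \<Rightarrow> 'a) ring" where
  "seq_ring A = \<lparr> carrier = {x. \<forall>k. x k \<in> carrier A},
                  monoid.mult = (\<lambda>x y k. x k \<otimes>\<^bsub>A\<^esub> y k),
                  monoid.one = (\<lambda>k. \<one>\<^bsub>A\<^esub>),
                  ring.zero = (\<lambda>k. \<zero>\<^bsub>A\<^esub>),
                  ring.add = (\<lambda>x y k. x k \<oplus>\<^bsub>A\<^esub> y k) \<rparr>"

definition null_ideal :: "('a, 'm) ring_scheme \<Rightarrow> nat filter \<Rightarrow> (nat \<Rightarrow> 'a) set" where
  "null_ideal A U = {x \<in> carrier (seq_ring A). eventually (\<lambda>k. x k = \<zero>\<^bsub>A\<^esub>) U}"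

definition ultrapower :: "('a, 'm) ring_scheme \<Rightarrow> nat filter \<Rightarrow> (nat \<Rightarrow> 'a) set ring" where
  "ultrapower A U = seq_ring A Quot null_ideal A U"

definition star_set :: "('a, 'm) ring_scheme \<Rightarrow> nat filter \<Rightarrow> 'a set \<Rightarrow> (nat \<Rightarrow> 'a) set set" where
  "star_set A U J = {null_ideal A U +>\<^bsub>seq_ring A\<^esub> x | x.
                       x \<in> carrier (seq_ring A) \<and> eventually (\<lambda>k. x k \<in> J) U}"

definition star_diag :: "('a, 'm) ring_scheme \<Rightarrow> nat filter \<Rightarrow> 'a \<Rightarrow> (nat \<Rightarrow> 'a) set" where
  "star_diag A U a = null_ideal A U +>\<^bsub>seq_ring A\<^esub> (\<lambda>k. a)"

definition mu0 :: "('a, 'm) ring_scheme \<Rightarrow> nat filter \<Rightarrow> 'a set \<Rightarrow> (nat \<Rightarrow> 'a) set set" where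
  "mu0 A U I = (\<Inter>n\<in>{0<..}. star_set A U (ideal_pow A I n))"

end

theory Submission
  imports Defs
begin

lemma ideal_abelian_subgroup: "ring R \<Longrightarrow> ideal J R \<Longrightarrow> abelian_subgroup J R"
  using abelian_subgroupI3 ideal.axioms(1) ring.is_abelian_group by blast

lemma rcos_eq_iff:
  assumes R: "ring R" and J: "ideal J R" and x: "x \<in> carrier R" and y: "y \<in> carrier R"
  shows "(J +>\<^bsub>R\<^esub> x = J +>\<^bsub>R\<^esub> y) \<longleftrightarrow> x \<ominus>\<^bsub>R\<^esub> y \<in> J"
proof
  interpret abelian_subgroup J R using ideal_abelian_subgroup[OF R J] .
  interpret ring R by (rule R)
  assume "J +>\<^bsub>R\<^esub> x = J +>\<^bsub>R\<^esub> y"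
  then have "x \<in> J +>\<^bsub>R\<^esub> y" using a_rcos_self[OF x] by simp
  then show "x \<ominus>\<^bsub>R\<^esub> y \<in> J" using a_rcos_module_minus[OF R y x] by simp
next
  interpret abelian_subgroup J R using ideal_abelian_subgroup[OF R J] .
  interpret ring R by (rule R)
  assume "x \<ominus>\<^bsub>R\<^esub> y \<in> J"
  then have "x \<in> J +>\<^bsub>R\<^esub> y" using a_rcos_module_minus[OF R y x] by simp
  then show "J +>\<^bsub>R\<^esub> x = J +>\<^bsub>R\<^esub> y"
    using a_repr_independence'[OF _ y] by simp
qed

lemma rcos_zero_iff:
  assumes R: "ring R" and J: "ideal J R" and x: "x \<in> carrier R"
  shows "(J +>\<^bsub>R\<^esub> x = J) \<longleftrightarrow> x \<in> J"
  using ideal.rcos_const_imp_mem[OF J x] ring.a_rcos_zero[OF R J] by blast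

lemma quot_carrier: "carrier (R Quot J) = (\<lambda>x. J +>\<^bsub>R\<^esub> x) ` carrier R"
  unfolding FactRing_def A_RCOSETS_def' by auto

lemma quot_zero: "\<zero>\<^bsub>R Quot J\<^esub> = J"
  by (simp add: FactRing_def)

lemma rcos_mono: "J \<subseteq> K \<Longrightarrow> J +>\<^bsub>R\<^esub> x \<subseteq> K +>\<^bsub>R\<^esub> x"
  unfolding a_r_coset_def' by auto

lemma seq_ring_simps [simp]:
  "carrier (seq_ring A) = {x. \<forall>k. x k \<in> carrier A}"
  "x \<otimes>\<^bsub>seq_ring A\<^esub> y = (\<lambda>k. x k \<otimes>\<^bsub>A\<^esub> y k)"
  "x \<oplus>\<^bsub>seq_ring A\<^esub> y = (\<lambda>k. x k \<oplus>\<^bsub>A\<^esub> y k)"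
  "\<one>\<^bsub>seq_ring A\<^esub> = (\<lambda>k. \<one>\<^bsub>A\<^esub>)"
  "\<zero>\<^bsub>seq_ring A\<^esub> = (\<lambda>k. \<zero>\<^bsub>A\<^esub>)"
  by (simp_all add: seq_ring_def)

lemma seq_ring_cring:
  assumes "cring A" shows "cring (seq_ring A)"
proof -
  interpret cring A by fact
  show ?thesis
  proof (rule cringI)
    show "abelian_group (seq_ring A)"
    proof (rule abelian_groupI)
      fix x assume "x \<in> carrier (seq_ring A)"
      then show "\<exists>y\<in>carrier (seq_ring A). y \<oplus>\<^bsub>seq_ring A\<^esub> x = \<zero>\<^bsub>seq_ring A\<^esub>"
        by (intro bexI[of _ "\<lambda>k. \<ominus>\<^bsub>A\<^esub> x k"]) (auto simp: l_neg)
    qed (auto simp: a_ac)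
    show "comm_monoid (seq_ring A)"
      by (rule comm_monoidI) (auto simp: m_ac)
    fix x y z assume "x \<in> carrier (seq_ring A)" "y \<in> carrier (seq_ring A)" "z \<in> carrier (seq_ring A)"
    then show "(x \<oplus>\<^bsub>seq_ring A\<^esub> y) \<otimes>\<^bsub>seq_ring A\<^esub> z =
       x \<otimes>\<^bsub>seq_ring A\<^esub> z \<oplus>\<^bsub>seq_ring A\<^esub> y \<otimes>\<^bsub>seq_ring A\<^esub> z"
      by (auto simp: l_distr)
  qed
qed

lemma seq_ring_minus:
  assumes "cring A" "x \<in> carrier (seq_ring A)" "y \<in> carrier (seq_ring A)"
  shows "x \<ominus>\<^bsub>seq_ring A\<^esub> y = (\<lambda>k. x k \<ominus>\<^bsub>A\<^esub> y k)"
proof -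
  interpret A: cring A by fact
  interpret S: cring "seq_ring A" using seq_ring_cring[OF assms(1)] .
  have "(\<lambda>k. \<ominus>\<^bsub>A\<^esub> y k) \<in> carrier (seq_ring A)" using assms by auto
  moreover have "(\<lambda>k. \<ominus>\<^bsub>A\<^esub> y k) \<oplus>\<^bsub>seq_ring A\<^esub> y = \<zero>\<^bsub>seq_ring A\<^esub>"
    using assms by (auto simp: A.l_neg)
  ultimately have "\<ominus>\<^bsub>seq_ring A\<^esub> y = (\<lambda>k. \<ominus>\<^bsub>A\<^esub> y k)"
    using S.minus_equality assms(3) by blast
  then show ?thesis using assms by (simp add: S.minus_eq A.minus_eq)
qed


lemma ideal_pow_ideal:
  assumes "ring A" "ideal I A" shows "ideal (ideal_pow A I n) A"
  by (induction n) (simp_all add: assms ring.ideal_prod_is_ideal ring.oneideal)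

lemma ideal_pow_Suc_sub:
  assumes "ring A" "ideal I A" shows "ideal_pow A I (Suc n) \<subseteq> ideal_pow A I n"
  using ring.ideal_prod_inter[OF assms(1) assms(2) ideal_pow_ideal[OF assms]] by auto

lemma ideal_pow_mono:
  assumes "ring A" "ideal I A" "n \<le> m" shows "ideal_pow A I m \<subseteq> ideal_pow A I n"
  using assms(3)
proof (induction m)
  case 0 then show ?case by simp
next
  case (Suc m)
  then show ?case using ideal_pow_Suc_sub[OF assms(1,2), of m]
    by (cases "n = Suc m") auto
qed

lemma ideal_pow_carrier:
  assumes "ring A" "ideal I A" shows "ideal_pow A I n \<subseteq> carrier A"
  using ideal_pow_mono[OF assms, of 0 n] by simp

locale UP =
  fixes A :: "('a, 'm) ring_scheme" and U :: "nat filter"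
  assumes cr: "cring A" and fu: "free_ultrafilter_nat U"
begin

abbreviation "S \<equiv> seq_ring A"
abbreviation "N \<equiv> null_ideal A U"
abbreviation "P \<equiv> ultrapower A U"
abbreviation "cls x \<equiv> N +>\<^bsub>S\<^esub> x"

definition KJ :: "'a set \<Rightarrow> (nat \<Rightarrow> 'a) set" where
  "KJ J = {x \<in> carrier S. eventually (\<lambda>k. x k \<in> J) U}"

lemma A_ring: "ring A" using cr cring.axioms(1) by blast

lemma S_cring: "cring S" using seq_ring_cring[OF cr] .
lemma S_ring: "ring S" using S_cring cring.axioms(1) by blast

lemma U_nbot: "U \<noteq> bot" using fu unfolding free_ultrafilter_nat_def by blast
lemma U_ult: "eventually Q U \<or> eventually (\<lambda>n. \<not> Q n) U"
  using fu unfolding free_ultrafilter_nat_def by blast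
lemma U_free: "finite F \<Longrightarrow> \<not> eventually (\<lambda>n. n \<in> F) U"
  using fu unfolding free_ultrafilter_nat_def by blast

lemma U_ge: "eventually (\<lambda>k. n \<le> k) U"
proof -
  have "\<not> eventually (\<lambda>k. k \<in> {..<n}) U" by (rule U_free) simp
  then show ?thesis using U_ult[of "\<lambda>k. k \<in> {..<n}"] by (simp add: not_less)
qed

lemma ev_const: "eventually (\<lambda>k. Q) U \<longleftrightarrow> Q"
  using U_nbot by simp

lemma S_inv: "x \<in> carrier S \<Longrightarrow> \<ominus>\<^bsub>S\<^esub> x = (\<lambda>k. \<ominus>\<^bsub>A\<^esub> x k)"
proof -
  interpret A: cring A by (rule cr)
  interpret S: cring S by (rule S_cring)
  assume x: "x \<in> carrier S"
  have "(\<lambda>k. \<ominus>\<^bsub>A\<^esub> x k) \<in> carrier S" using x by auto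
  moreover have "(\<lambda>k. \<ominus>\<^bsub>A\<^esub> x k) \<oplus>\<^bsub>S\<^esub> x = \<zero>\<^bsub>S\<^esub>"
    using x by (auto simp: A.l_neg)
  ultimately show ?thesis using S.minus_equality x by blast
qed

lemma S_minus: "x \<in> carrier S \<Longrightarrow> y \<in> carrier S \<Longrightarrow> x \<ominus>\<^bsub>S\<^esub> y = (\<lambda>k. x k \<ominus>\<^bsub>A\<^esub> y k)"
  using seq_ring_minus[OF cr] by blast

lemma KJ_ideal:
  assumes J: "ideal J A" shows "ideal (KJ J) S"
proof -
  interpret A: cring A by (rule cr)
  interpret J: ideal J A by (rule J)
  interpret S: cring S by (rule S_cring)
  show ?thesis
  proof (rule idealI[OF S_ring])
    show "subgroup (KJ J) (add_monoid S)"
    proof (rule S.add.subgroupI)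
      show "KJ J \<subseteq> carrier S" by (auto simp: KJ_def)
      have "(\<lambda>k. \<zero>\<^bsub>A\<^esub>) \<in> KJ J" by (auto simp: KJ_def)
      then show "KJ J \<noteq> {}" by blast
    next
      fix a assume a: "a \<in> KJ J"
      then have "\<ominus>\<^bsub>S\<^esub> a = (\<lambda>k. \<ominus>\<^bsub>A\<^esub> a k)" using S_inv by (simp add: KJ_def)
      then show "\<ominus>\<^bsub>S\<^esub> a \<in> KJ J" using a
        by (auto simp: KJ_def elim: eventually_mono)
    next
      fix a b assume a: "a \<in> KJ J" and b: "b \<in> KJ J"
      then have "eventually (\<lambda>k. a k \<in> J) U" "eventually (\<lambda>k. b k \<in> J) U"
        by (auto simp: KJ_def)
      then have "eventually (\<lambda>k. a k \<oplus>\<^bsub>A\<^esub> b k \<in> J) U"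
        by eventually_elim (simp add: J.a_closed)
      then show "a \<oplus>\<^bsub>S\<^esub> b \<in> KJ J" using a b by (auto simp: KJ_def)
    qed
  next
    fix a x assume "a \<in> KJ J" "x \<in> carrier S"
    then show "x \<otimes>\<^bsub>S\<^esub> a \<in> KJ J" "a \<otimes>\<^bsub>S\<^esub> x \<in> KJ J"
      by (auto simp: KJ_def J.I_l_closed J.I_r_closed elim: eventually_mono)
  qed
qed

lemma N_eq: "N = KJ {\<zero>\<^bsub>A\<^esub>}"
  unfolding null_ideal_def KJ_def by simp

lemma N_ideal: "ideal N S"
  unfolding N_eq by (rule KJ_ideal) (simp add: ring.zeroideal A_ring)

lemma P_cring: "cring P"
  unfolding ultrapower_def using ideal.quotient_is_cring[OF N_ideal S_cring] .
lemma P_ring: "ring P" using P_cring cring.axioms(1) by blast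

lemma cls_hom: "(\<lambda>x. cls x) \<in> ring_hom S P"
  unfolding ultrapower_def using ideal.rcos_ring_hom[OF N_ideal] .

lemma P_carrier: "carrier P = cls ` carrier S"
  unfolding ultrapower_def by (rule quot_carrier)

lemma cls_carrier: "x \<in> carrier S \<Longrightarrow> cls x \<in> carrier P"
  using P_carrier by blast

lemma cls_mult: "x \<in> carrier S \<Longrightarrow> y \<in> carrier S \<Longrightarrow> cls x \<otimes>\<^bsub>P\<^esub> cls y = cls (x \<otimes>\<^bsub>S\<^esub> y)"
  using ring_hom_mult[OF cls_hom] by simp
lemma cls_add: "x \<in> carrier S \<Longrightarrow> y \<in> carrier S \<Longrightarrow> cls x \<oplus>\<^bsub>P\<^esub> cls y = cls (x \<oplus>\<^bsub>S\<^esub> y)"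
  using ring_hom_add[OF cls_hom] by simp
lemma cls_one: "cls \<one>\<^bsub>S\<^esub> = \<one>\<^bsub>P\<^esub>"
  using ring_hom_one[OF cls_hom] by simp
lemma cls_minus: "x \<in> carrier S \<Longrightarrow> y \<in> carrier S \<Longrightarrow> cls x \<ominus>\<^bsub>P\<^esub> cls y = cls (x \<ominus>\<^bsub>S\<^esub> y)"
proof -
  interpret S: cring S by (rule S_cring)
  interpret h: ring_hom_cring S P cls
    unfolding ultrapower_def by (rule ideal.rcos_ring_hom_cring[OF N_ideal S_cring])
  assume "x \<in> carrier S" "y \<in> carrier S"
  then show ?thesis by (simp del: seq_ring_simps add: S.minus_eq h.S.minus_eq)
qed

lemma cls_eq: "x \<in> carrier S \<Longrightarrow> y \<in> carrier S \<Longrightarrow> cls x = cls y \<longleftrightarrow> eventually (\<lambda>k. x k = y k) U"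
proof -
  interpret A: cring A by (rule cr)
  assume x: "x \<in> carrier S" and y: "y \<in> carrier S"
  have "cls x = cls y \<longleftrightarrow> x \<ominus>\<^bsub>S\<^esub> y \<in> N"
    by (rule rcos_eq_iff[OF S_ring N_ideal x y])
  also have "\<dots> \<longleftrightarrow> eventually (\<lambda>k. x k \<ominus>\<^bsub>A\<^esub> y k = \<zero>\<^bsub>A\<^esub>) U"
    using x y by (simp add: S_minus null_ideal_def)
  also have "\<dots> \<longleftrightarrow> eventually (\<lambda>k. x k = y k) U"
    using x y by (intro eventually_cong always_eventually) (auto simp: A.r_right_minus_eq)
  finally show ?thesis .
qed

definition star :: "'a set \<Rightarrow> (nat \<Rightarrow> 'a) set set" where
  "star J = star_set A U J"

lemma star_eq: "star J = cls ` KJ J"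
  unfolding star_def star_set_def KJ_def by auto

lemma star_mem: assumes J: "ideal J A" and x: "x \<in> carrier S"
  shows "cls x \<in> star J \<longleftrightarrow> eventually (\<lambda>k. x k \<in> J) U"
proof
  assume "cls x \<in> star J"
  then obtain y where y: "y \<in> KJ J" "cls x = cls y" unfolding star_eq by blast
  then have "eventually (\<lambda>k. x k = y k) U" "eventually (\<lambda>k. y k \<in> J) U"
    using cls_eq[OF x] by (auto simp: KJ_def)
  then show "eventually (\<lambda>k. x k \<in> J) U" by eventually_elim simp
next
  assume "eventually (\<lambda>k. x k \<in> J) U"
  then show "cls x \<in> star J" using x unfolding star_eq KJ_def by blast
qed

lemma star_ideal: assumes J: "ideal J A" shows "ideal (star J) P"
  unfolding star_eq ultrapower_def
  by (rule ring.ring_ideal_imp_quot_ideal[OF S_ring N_ideal KJ_ideal[OF J]])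

lemma star_sub: "star J \<subseteq> carrier P"
  unfolding star_eq P_carrier KJ_def by auto

lemma star_mono: assumes "ideal J A" "ideal K A" "J \<subseteq> K" shows "star J \<subseteq> star K"
  unfolding star_eq KJ_def using assms(3) by (auto elim!: eventually_mono)

end


declare ideal_pow.simps(2)[simp del]

lemma telesc:
  assumes R: "ring A" and I: "ideal I A" and x: "\<And>M. x M \<in> carrier A"
    and D: "\<And>m. n \<le> m \<Longrightarrow> m < M \<Longrightarrow> x (Suc m) \<ominus>\<^bsub>A\<^esub> x m \<in> ideal_pow A I (Suc m)"
    and nM: "n \<le> M"
  shows "x M \<ominus>\<^bsub>A\<^esub> x n \<in> ideal_pow A I (Suc n)"
  using nM D
proof (induction M rule: dec_induct)
  case base
  interpret ring A by (rule R)
  interpret J: ideal "ideal_pow A I (Suc n)" A by (rule ideal_pow_ideal[OF R I])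
  show ?case using x[of n] J.zero_closed r_right_minus_eq by metis
next
  case (step M)
  interpret ring A by (rule R)
  interpret J: ideal "ideal_pow A I (Suc n)" A by (rule ideal_pow_ideal[OF R I])
  have h1: "x M \<ominus>\<^bsub>A\<^esub> x n \<in> ideal_pow A I (Suc n)" using step by simp
  have "x (Suc M) \<ominus>\<^bsub>A\<^esub> x M \<in> ideal_pow A I (Suc M)" using step by simp
  then have h2: "x (Suc M) \<ominus>\<^bsub>A\<^esub> x M \<in> ideal_pow A I (Suc n)"
    using ideal_pow_mono[OF R I, of "Suc n" "Suc M"] step(1) by auto
  have "x (Suc M) \<ominus>\<^bsub>A\<^esub> x n = (x (Suc M) \<ominus>\<^bsub>A\<^esub> x M) \<oplus>\<^bsub>A\<^esub> (x M \<ominus>\<^bsub>A\<^esub> x n)"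
    using x by (simp add: minus_eq a_assoc l_neg r_neg1)
  then show ?case using h1 h2 J.a_closed by simp
qed

definition phm_g :: "('a, 'm) ring_scheme \<Rightarrow> nat filter \<Rightarrow> 'a set \<Rightarrow> (nat \<Rightarrow> 'a) set \<Rightarrow> nat \<Rightarrow> (nat \<Rightarrow> 'a) set set" where
  "phm_g A U I Z = (\<lambda>n. star_set A U (ideal_pow A I (Suc n)) +>\<^bsub>ultrapower A U\<^esub> Z)"

locale UPI = UP +
  fixes I :: "'a set"
  assumes idl: "ideal I A"
begin

abbreviation "Ip n \<equiv> ideal_pow A I n"
definition Jn :: "nat \<Rightarrow> (nat \<Rightarrow> 'a) set set" where
  "Jn n = star (Ip (Suc n))"

abbreviation "phm \<equiv> phm_g A U I"

abbreviation "L \<equiv> coset_limit (\<lambda>n. P Quot Jn n)"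

lemma phm_eq: "phm Z = (\<lambda>n. Jn n +>\<^bsub>P\<^esub> Z)"
  by (simp add: phm_g_def Jn_def star_def)

lemma Ip_ideal: "ideal (Ip n) A" using ideal_pow_ideal[OF A_ring idl] .

lemma Jn_ideal: "ideal (Jn n) P" unfolding Jn_def by (rule star_ideal[OF Ip_ideal])

lemma Jn_Suc: "Jn (Suc n) \<subseteq> Jn n"
  unfolding Jn_def by (rule star_mono[OF Ip_ideal Ip_ideal ideal_pow_Suc_sub[OF A_ring idl]])

lemma L_simps:
  "carrier L = {f. (\<forall>n. f n \<in> carrier (P Quot Jn n)) \<and> (\<forall>n. f (Suc n) \<subseteq> f n)}"
  "f \<otimes>\<^bsub>L\<^esub> g = (\<lambda>n. f n \<otimes>\<^bsub>P Quot Jn n\<^esub> g n)"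
  "f \<oplus>\<^bsub>L\<^esub> g = (\<lambda>n. f n \<oplus>\<^bsub>P Quot Jn n\<^esub> g n)"
  "\<one>\<^bsub>L\<^esub> = (\<lambda>n. \<one>\<^bsub>P Quot Jn n\<^esub>)"
  "\<zero>\<^bsub>L\<^esub> = (\<lambda>n. \<zero>\<^bsub>P Quot Jn n\<^esub>)"
  by (simp_all add: coset_limit_def)

lemma phi_carrier: "Z \<in> carrier P \<Longrightarrow> phm Z \<in> carrier L"
  unfolding L_simps phm_eq quot_carrier
  using rcos_mono[OF Jn_Suc] by blast

lemma phi_hom: "phm \<in> ring_hom P L"
proof (rule ring_hom_memI)
  fix Z assume "Z \<in> carrier P" then show "phm Z \<in> carrier L" by (rule phi_carrier)
next
  fix Z W assume "Z \<in> carrier P" "W \<in> carrier P"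
  then show "phm (Z \<otimes>\<^bsub>P\<^esub> W) = phm Z \<otimes>\<^bsub>L\<^esub> phm W" "phm (Z \<oplus>\<^bsub>P\<^esub> W) = phm Z \<oplus>\<^bsub>L\<^esub> phm W"
    unfolding L_simps phm_eq
    using ring_hom_mult[OF ideal.rcos_ring_hom[OF Jn_ideal]]
      ring_hom_add[OF ideal.rcos_ring_hom[OF Jn_ideal]] by auto
next
  show "phm \<one>\<^bsub>P\<^esub> = \<one>\<^bsub>L\<^esub>"
    unfolding L_simps phm_eq
    using ring_hom_one[OF ideal.rcos_ring_hom[OF Jn_ideal]] by auto
qed

lemma Jn_mem: "x \<in> carrier S \<Longrightarrow> cls x \<in> Jn n \<longleftrightarrow> eventually (\<lambda>k. x k \<in> Ip (Suc n)) U"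
  unfolding Jn_def by (rule star_mem[OF Ip_ideal])

lemma phi_cls_eq: assumes "x \<in> carrier S" "y \<in> carrier S"
  shows "Jn n +>\<^bsub>P\<^esub> cls x = Jn n +>\<^bsub>P\<^esub> cls y \<longleftrightarrow> eventually (\<lambda>k. x k \<ominus>\<^bsub>A\<^esub> y k \<in> Ip (Suc n)) U"
proof -
  have "Jn n +>\<^bsub>P\<^esub> cls x = Jn n +>\<^bsub>P\<^esub> cls y \<longleftrightarrow> cls x \<ominus>\<^bsub>P\<^esub> cls y \<in> Jn n"
    by (rule rcos_eq_iff[OF P_ring Jn_ideal cls_carrier cls_carrier]) (use assms in auto)
  also have "\<dots> \<longleftrightarrow> cls (x \<ominus>\<^bsub>S\<^esub> y) \<in> Jn n" using cls_minus assms by simp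
  also have "\<dots> \<longleftrightarrow> eventually (\<lambda>k. x k \<ominus>\<^bsub>A\<^esub> y k \<in> Ip (Suc n)) U"
  proof -
    interpret A: cring A by (rule cr)
    have "x \<ominus>\<^bsub>S\<^esub> y \<in> carrier S" using assms by (simp add: S_minus)
    then show ?thesis using Jn_mem[of "x \<ominus>\<^bsub>S\<^esub> y"] assms by (simp add: S_minus)
  qed
  finally show ?thesis .
qed

lemma phi_surj: "phm ` carrier P = carrier L"
proof
  show "phm ` carrier P \<subseteq> carrier L" using phi_carrier by blast
next
  show "carrier L \<subseteq> phm ` carrier P"
  proof
    interpret A: cring A by (rule cr)
    fix f assume f: "f \<in> carrier L"
    have "\<forall>n. \<exists>x. x \<in> carrier S \<and> f n = Jn n +>\<^bsub>P\<^esub> cls x"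
    proof
      fix n
      have "f n \<in> carrier (P Quot Jn n)" using f unfolding L_simps by blast
      then show "\<exists>x. x \<in> carrier S \<and> f n = Jn n +>\<^bsub>P\<^esub> cls x"
        unfolding quot_carrier P_carrier by blast
    qed
    then obtain x where x: "\<And>n. x n \<in> carrier S" and fx: "\<And>n. f n = Jn n +>\<^bsub>P\<^esub> cls (x n)"
      by metis
    have xA: "\<And>n k. x n k \<in> carrier A" using x by simp
    have D: "eventually (\<lambda>k. x (Suc n) k \<ominus>\<^bsub>A\<^esub> x n k \<in> Ip (Suc n)) U" for n
    proof -
      interpret J1: abelian_subgroup "Jn (Suc n)" P
        by (rule ideal_abelian_subgroup[OF P_ring Jn_ideal])
      have "cls (x (Suc n)) \<in> f (Suc n)"
        unfolding fx by (rule J1.a_rcos_self[OF cls_carrier[OF x]])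
      also have "\<dots> \<subseteq> f n" using f unfolding L_simps by blast
      finally have "cls (x (Suc n)) \<in> Jn n +>\<^bsub>P\<^esub> cls (x n)" unfolding fx .
      then have "Jn n +>\<^bsub>P\<^esub> cls (x (Suc n)) = Jn n +>\<^bsub>P\<^esub> cls (x n)"
        using abelian_subgroup.a_repr_independence'[OF ideal_abelian_subgroup[OF P_ring Jn_ideal]
            _ cls_carrier[OF x]] by metis
      then show ?thesis using phi_cls_eq[OF x x] by blast
    qed
    define G where "G n = {k. n \<le> k \<and> (\<forall>m\<le>n. x (Suc m) k \<ominus>\<^bsub>A\<^esub> x m k \<in> Ip (Suc m))}" for n
    have evG: "eventually (\<lambda>k. k \<in> G n) U" for n
    proof -
      have "eventually (\<lambda>k. \<forall>m\<in>{..n}. x (Suc m) k \<ominus>\<^bsub>A\<^esub> x m k \<in> Ip (Suc m)) U"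
        using D by (intro eventually_ball_finite) auto
      then show ?thesis using U_ge[of n] unfolding G_def by eventually_elim auto
    qed
    define nk where "nk k = (if \<exists>n. k \<in> G n then GREATEST n. k \<in> G n else 0)" for k
    define y where "y k = x (nk k) k" for k
    have y: "y \<in> carrier S" using xA unfolding y_def by simp
    have Gb: "k \<in> G n \<Longrightarrow> n \<le> k" for k n unfolding G_def by simp
    have nk: "k \<in> G n \<Longrightarrow> n \<le> nk k \<and> k \<in> G (nk k)" for k n
    proof -
      assume kn: "k \<in> G n"
      then have "nk k = (GREATEST n. k \<in> G n)" unfolding nk_def by auto
      then show ?thesis using Greatest_le_nat[of "\<lambda>n. k \<in> G n" n k] GreatestI_nat[of "\<lambda>n. k \<in> G n" n k]
        kn Gb by auto
    qed
    have ev: "eventually (\<lambda>k. y k \<ominus>\<^bsub>A\<^esub> x n k \<in> Ip (Suc n)) U" for n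
      using evG[of n]
    proof eventually_elim
      case (elim k)
      then have 1: "n \<le> nk k" and 2: "k \<in> G (nk k)" using nk by auto
      show ?case unfolding y_def
      proof (rule telesc[OF A_ring idl, of "\<lambda>M. x M k"])
        fix m assume "n \<le> m" "m < nk k"
        then show "x (Suc m) k \<ominus>\<^bsub>A\<^esub> x m k \<in> Ip (Suc m)" using 2 unfolding G_def by auto
      qed (use xA 1 in auto)
    qed
    have "phm (cls y) = f"
    proof
      fix n show "phm (cls y) n = f n"
        unfolding phm_eq fx using phi_cls_eq[OF y x] ev by blast
    qed
    then show "f \<in> phm ` carrier P" using cls_carrier[OF y] by blast
  qed
qed

lemma mu0_eq: "mu0 A U I = (\<Inter>n. Jn n)"
proof -
  have "mu0 A U I = (\<Inter>n\<in>{0<..}. star (Ip n))" unfolding mu0_def star_def by simp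
  also have "\<dots> = (\<Inter>n. star (Ip (Suc n)))"
  proof (intro equalityI subsetI)
    fix Z assume "Z \<in> (\<Inter>n\<in>{0<..}. star (Ip n))" then show "Z \<in> (\<Inter>n. star (Ip (Suc n)))" by auto
  next
    fix Z assume Z: "Z \<in> (\<Inter>n. star (Ip (Suc n)))"
    show "Z \<in> (\<Inter>n\<in>{0<..}. star (Ip n))"
    proof
      fix n :: nat assume "n \<in> {0<..}"
      then obtain m where "n = Suc m" using not0_implies_Suc by auto
      then show "Z \<in> star (Ip n)" using Z by auto
    qed
  qed
  finally show ?thesis unfolding Jn_def .
qed

lemma kernel_eq: "a_kernel P L phm = mu0 A U I"
proof -
  have "a_kernel P L phm = {Z \<in> carrier P. \<forall>n. Jn n +>\<^bsub>P\<^esub> Z = Jn n}"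
    unfolding a_kernel_def' L_simps quot_zero phm_eq by (auto simp: fun_eq_iff)
  also have "\<dots> = {Z \<in> carrier P. \<forall>n. Z \<in> Jn n}"
    using rcos_zero_iff[OF P_ring Jn_ideal] by blast
  also have "\<dots> = (\<Inter>n. Jn n)"
    using star_sub unfolding Jn_def by blast
  finally show ?thesis using mu0_eq by simp
qed

lemma L_ring: "ring L"
proof -
  have "ring (L \<lparr> carrier := phm ` (carrier P), zero := phm \<zero>\<^bsub>P\<^esub> \<rparr>)"
    by (rule ring.ring_hom_imp_img_ring[OF P_ring phi_hom])
  moreover have "phm \<zero>\<^bsub>P\<^esub> = \<zero>\<^bsub>L\<^esub>"
    unfolding phm_eq L_simps quot_zero
    using rcos_zero_iff[OF P_ring Jn_ideal] additive_subgroup.zero_closed[OF ideal.axioms(1)[OF Jn_ideal]]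
      ring.ring_simprules(2)[OF P_ring] by auto
  ultimately show ?thesis using phi_surj by (simp add: coset_limit_def)
qed

lemma part_i: "L \<simeq> P Quot mu0 A U I"
proof -
  have hr: "ring_hom_ring P L phm" by (rule ring_hom_ringI2[OF P_ring L_ring phi_hom])
  have "P Quot a_kernel P L phm \<simeq> L" by (rule ring_hom_ring.FactRing_iso[OF hr phi_surj])
  moreover have "ring (P Quot a_kernel P L phm)"
    using ideal.quotient_is_ring[OF ring_hom_ring.kernel_is_ideal[OF hr]] .
  ultimately have "L \<simeq> P Quot a_kernel P L phm" using ring_iso_sym by blast
  then show ?thesis unfolding kernel_eq .
qed

end

lemma compat:
  assumes R: "ring R" and J1: "ideal J1 R" and J0: "ideal J0 R"
    and x1: "x1 \<in> carrier R" and x0: "x0 \<in> carrier R"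
    and sub: "J1 +>\<^bsub>R\<^esub> x1 \<subseteq> J0 +>\<^bsub>R\<^esub> x0"
  shows "J0 +>\<^bsub>R\<^esub> x1 = J0 +>\<^bsub>R\<^esub> x0"
proof -
  interpret J1: abelian_subgroup J1 R by (rule ideal_abelian_subgroup[OF R J1])
  interpret J0: abelian_subgroup J0 R by (rule ideal_abelian_subgroup[OF R J0])
  have "x1 \<in> J0 +>\<^bsub>R\<^esub> x0" using J1.a_rcos_self[OF x1] sub by blast
  then show ?thesis using J0.a_repr_independence'[OF _ x0] by metis
qed

lemma ult_fin:
  assumes "finite F" "free_ultrafilter_nat U" "eventually (\<lambda>k. g k \<in> F) U"
  shows "\<exists>c\<in>F. eventually (\<lambda>k. g k = c) U"
  using assms(1,3)
proof (induction F rule: finite_induct)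
  case empty
  then have "eventually (\<lambda>k. False) U" by simp
  then show ?case using assms(2) unfolding free_ultrafilter_nat_def by (simp add: eventually_False)
next
  case (insert c F)
  show ?case
  proof (cases "eventually (\<lambda>k. g k = c) U")
    case True then show ?thesis by blast
  next
    case False
    then have "eventually (\<lambda>k. g k \<noteq> c) U"
      using assms(2) unfolding free_ultrafilter_nat_def by blast
    with insert.prems have "eventually (\<lambda>k. g k \<in> F) U"
      by eventually_elim auto
    then show ?thesis using insert.IH by blast
  qed
qed

context UPI
begin

abbreviation "Ahat \<equiv> adic_completion A I"
abbreviation "canon \<equiv> adic_canon A I"
abbreviation "M0 \<equiv> mu0 A U I"
abbreviation "Q \<equiv> P Quot M0"

lemma Ahat_simps:
  "carrier Ahat = {f. (\<forall>n. f n \<in> carrier (A Quot Ip (Suc n))) \<and> (\<forall>n. f (Suc n) \<subseteq> f n)}"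
  "f \<otimes>\<^bsub>Ahat\<^esub> g = (\<lambda>n. f n \<otimes>\<^bsub>A Quot Ip (Suc n)\<^esub> g n)"
  "f \<oplus>\<^bsub>Ahat\<^esub> g = (\<lambda>n. f n \<oplus>\<^bsub>A Quot Ip (Suc n)\<^esub> g n)"
  "\<one>\<^bsub>Ahat\<^esub> = (\<lambda>n. \<one>\<^bsub>A Quot Ip (Suc n)\<^esub>)"
  by (simp_all add: adic_completion_def coset_limit_def)

lemma canon_eq_def: "canon a = (\<lambda>n. Ip (Suc n) +>\<^bsub>A\<^esub> a)"
  by (simp add: adic_canon_def)

lemma canon_carrier: "a \<in> carrier A \<Longrightarrow> canon a \<in> carrier Ahat"
  unfolding Ahat_simps canon_eq_def quot_carrier
  using rcos_mono[OF ideal_pow_Suc_sub[OF A_ring idl]] by blast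

lemma canon_hom: "canon \<in> ring_hom A Ahat"
proof (rule ring_hom_memI)
  fix a assume "a \<in> carrier A" then show "canon a \<in> carrier Ahat" by (rule canon_carrier)
next
  fix a b assume "a \<in> carrier A" "b \<in> carrier A"
  then show "canon (a \<otimes>\<^bsub>A\<^esub> b) = canon a \<otimes>\<^bsub>Ahat\<^esub> canon b"
    "canon (a \<oplus>\<^bsub>A\<^esub> b) = canon a \<oplus>\<^bsub>Ahat\<^esub> canon b"
    unfolding Ahat_simps canon_eq_def
    using ring_hom_mult[OF ideal.rcos_ring_hom[OF Ip_ideal]]
      ring_hom_add[OF ideal.rcos_ring_hom[OF Ip_ideal]] by auto
next
  show "canon \<one>\<^bsub>A\<^esub> = \<one>\<^bsub>Ahat\<^esub>"
    unfolding Ahat_simps canon_eq_def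
    using ring_hom_one[OF ideal.rcos_ring_hom[OF Ip_ideal]] by auto
qed

lemma canon_eq_iff: "a \<in> carrier A \<Longrightarrow> b \<in> carrier A \<Longrightarrow>
  canon a = canon b \<longleftrightarrow> (\<forall>n. a \<ominus>\<^bsub>A\<^esub> b \<in> Ip (Suc n))"
  unfolding canon_eq_def fun_eq_iff using rcos_eq_iff[OF A_ring Ip_ideal] by blast

lemma canon_inj:
  assumes sep: "adic_separated A I"
  shows "inj_on canon (carrier A)"
proof (rule inj_onI)
  interpret A: cring A by (rule cr)
  fix a b assume a: "a \<in> carrier A" and b: "b \<in> carrier A" and e: "canon a = canon b"
  have "a \<ominus>\<^bsub>A\<^esub> b \<in> Ip n" for n
  proof (cases n)
    case 0 then show ?thesis using a b by simp
  next
    case (Suc m) then show ?thesis using e canon_eq_iff[OF a b] by simp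
  qed
  then have "a \<ominus>\<^bsub>A\<^esub> b \<in> (\<Inter>n. Ip n)" by blast
  then have "a \<ominus>\<^bsub>A\<^esub> b = \<zero>\<^bsub>A\<^esub>" using sep unfolding adic_separated_def by blast
  then show "a = b" using a b A.r_right_minus_eq by blast
qed

lemma canon_surj:
  assumes comp: "adic_complete A I"
  shows "canon ` carrier A = carrier Ahat"
proof
  show "canon ` carrier A \<subseteq> carrier Ahat" using canon_carrier by blast
next
  show "carrier Ahat \<subseteq> canon ` carrier A"
  proof
    interpret A: cring A by (rule cr)
    fix f assume f: "f \<in> carrier Ahat"
    have "\<forall>n. \<exists>x. x \<in> carrier A \<and> f n = Ip (Suc n) +>\<^bsub>A\<^esub> x"
    proof
      fix n
      have "f n \<in> carrier (A Quot Ip (Suc n))" using f unfolding Ahat_simps by blast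
      then show "\<exists>x. x \<in> carrier A \<and> f n = Ip (Suc n) +>\<^bsub>A\<^esub> x"
        unfolding quot_carrier by blast
    qed
    then obtain x where x: "\<And>n. x n \<in> carrier A" and fx: "\<And>n. f n = Ip (Suc n) +>\<^bsub>A\<^esub> x n"
      by metis
    have D: "x (Suc n) \<ominus>\<^bsub>A\<^esub> x n \<in> Ip (Suc n)" for n
    proof -
      have "f (Suc n) \<subseteq> f n" using f unfolding Ahat_simps by blast
      then have "Ip (Suc (Suc n)) +>\<^bsub>A\<^esub> x (Suc n) \<subseteq> Ip (Suc n) +>\<^bsub>A\<^esub> x n" unfolding fx .
      then have "Ip (Suc n) +>\<^bsub>A\<^esub> x (Suc n) = Ip (Suc n) +>\<^bsub>A\<^esub> x n"
        by (rule compat[OF A_ring Ip_ideal Ip_ideal x x])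
      then show ?thesis using rcos_eq_iff[OF A_ring Ip_ideal x x] by blast
    qed
    have T: "x m \<ominus>\<^bsub>A\<^esub> x n \<in> Ip (Suc n)" if "n \<le> m" for m n
      by (rule telesc[OF A_ring idl x]) (use D that in auto)
    have TT: "Ip (Suc n) +>\<^bsub>A\<^esub> x m = Ip (Suc n) +>\<^bsub>A\<^esub> x n" if "n \<le> m" for m n
      using T[OF that] rcos_eq_iff[OF A_ring Ip_ideal x x] by blast
    have cauchy: "\<forall>n. \<exists>N. \<forall>m\<ge>N. \<forall>k\<ge>N. x m \<ominus>\<^bsub>A\<^esub> x k \<in> Ip n"
    proof
      fix n show "\<exists>N. \<forall>m\<ge>N. \<forall>k\<ge>N. x m \<ominus>\<^bsub>A\<^esub> x k \<in> Ip n"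
      proof (intro exI allI impI)
        fix m k assume "n \<le> m" "n \<le> k"
        then have "Ip (Suc n) +>\<^bsub>A\<^esub> x m = Ip (Suc n) +>\<^bsub>A\<^esub> x k"
          using TT[of n m] TT[of n k] by simp
        then have "x m \<ominus>\<^bsub>A\<^esub> x k \<in> Ip (Suc n)" using rcos_eq_iff[OF A_ring Ip_ideal x x] by blast
        then show "x m \<ominus>\<^bsub>A\<^esub> x k \<in> Ip n" using ideal_pow_Suc_sub[OF A_ring idl] by blast
      qed
    qed
    have xall: "\<forall>k. x k \<in> carrier A" using x by blast
    obtain a where a: "a \<in> carrier A" and lim: "\<forall>n. \<exists>N. \<forall>m\<ge>N. x m \<ominus>\<^bsub>A\<^esub> a \<in> Ip n"
      using comp[unfolded adic_complete_def, rule_format, OF x cauchy[rule_format]] by blast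
    have "canon a = f"
    proof
      fix n
      obtain N where N: "\<forall>m\<ge>N. x m \<ominus>\<^bsub>A\<^esub> a \<in> Ip (Suc n)" using lim by blast
      define m where "m = max N n"
      have "x m \<ominus>\<^bsub>A\<^esub> a \<in> Ip (Suc n)" using N unfolding m_def by simp
      then have "Ip (Suc n) +>\<^bsub>A\<^esub> x m = Ip (Suc n) +>\<^bsub>A\<^esub> a"
        using rcos_eq_iff[OF A_ring Ip_ideal x a] by blast
      moreover have "Ip (Suc n) +>\<^bsub>A\<^esub> x m = Ip (Suc n) +>\<^bsub>A\<^esub> x n" using TT[of n m] unfolding m_def by simp
      ultimately show "canon a n = f n" unfolding canon_eq_def fx by simp
    qed
    then show "f \<in> canon ` carrier A" using a by blast
  qed
qed

lemma M0_ideal: "ideal M0 P"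
proof -
  have hr: "ring_hom_ring P L phm" by (rule ring_hom_ringI2[OF P_ring L_ring phi_hom])
  show ?thesis using ring_hom_ring.kernel_is_ideal[OF hr] unfolding kernel_eq .
qed

lemma M0_mem: "x \<in> carrier S \<Longrightarrow> cls x \<in> M0 \<longleftrightarrow> (\<forall>n. eventually (\<lambda>k. x k \<in> Ip (Suc n)) U)"
  using mu0_eq Jn_mem by auto

definition diag :: "'a \<Rightarrow> nat \<Rightarrow> 'a" where "diag a = (\<lambda>k. a)"

lemma diag_hom: "diag \<in> ring_hom A S"
  by (rule ring_hom_memI) (auto simp: diag_def)

definition psi :: "'a \<Rightarrow> (nat \<Rightarrow> 'a) set set" where
  "psi a = M0 +>\<^bsub>ultrapower A U\<^esub> (null_ideal A U +>\<^bsub>seq_ring A\<^esub> diag a)"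

lemma psi_hom: "psi \<in> ring_hom A Q"
proof -
  have "(\<lambda>a. cls (diag a)) \<in> ring_hom A P" using ring_hom_trans[OF diag_hom cls_hom] by (simp add: comp_def)
  from ring_hom_trans[OF this ideal.rcos_ring_hom[OF M0_ideal]]
  show ?thesis unfolding psi_def by (simp add: comp_def)
qed

lemma Q_carrier: "carrier Q = {M0 +>\<^bsub>P\<^esub> cls x | x. x \<in> carrier S}"
  unfolding quot_carrier P_carrier by blast

lemma Q_eq: assumes "x \<in> carrier S" "y \<in> carrier S"
  shows "M0 +>\<^bsub>P\<^esub> cls x = M0 +>\<^bsub>P\<^esub> cls y \<longleftrightarrow> (\<forall>n. eventually (\<lambda>k. x k \<ominus>\<^bsub>A\<^esub> y k \<in> Ip (Suc n)) U)"
proof -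
  interpret A: cring A by (rule cr)
  have "M0 +>\<^bsub>P\<^esub> cls x = M0 +>\<^bsub>P\<^esub> cls y \<longleftrightarrow> cls x \<ominus>\<^bsub>P\<^esub> cls y \<in> M0"
    by (rule rcos_eq_iff[OF P_ring M0_ideal cls_carrier cls_carrier]) (use assms in auto)
  also have "\<dots> \<longleftrightarrow> cls (x \<ominus>\<^bsub>S\<^esub> y) \<in> M0" using cls_minus assms by simp
  also have "\<dots> \<longleftrightarrow> (\<forall>n. eventually (\<lambda>k. x k \<ominus>\<^bsub>A\<^esub> y k \<in> Ip (Suc n)) U)"
  proof -
    have "x \<ominus>\<^bsub>S\<^esub> y \<in> carrier S" using assms by (simp add: S_minus)
    then show ?thesis using M0_mem[of "x \<ominus>\<^bsub>S\<^esub> y"] assms by (simp add: S_minus)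
  qed
  finally show ?thesis .
qed

lemma diag_carrier: "a \<in> carrier A \<Longrightarrow> diag a \<in> carrier S" by (simp add: diag_def)

lemma psi_eq_iff: assumes "a \<in> carrier A" "b \<in> carrier A"
  shows "psi a = psi b \<longleftrightarrow> canon a = canon b"
proof -
  have "psi a = psi b \<longleftrightarrow> (\<forall>n. eventually (\<lambda>k. a \<ominus>\<^bsub>A\<^esub> b \<in> Ip (Suc n)) U)"
    unfolding psi_def using Q_eq[OF diag_carrier diag_carrier, OF assms] by (simp add: diag_def)
  also have "\<dots> \<longleftrightarrow> (\<forall>n. a \<ominus>\<^bsub>A\<^esub> b \<in> Ip (Suc n))" by (simp add: ev_const)
  finally show ?thesis using canon_eq_iff[OF assms] by simp
qed

end

context UPI
begin

lemma psi_star_diag: "psi a = M0 +>\<^bsub>P\<^esub> star_diag A U a"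
  unfolding psi_def star_diag_def diag_def ..

definition hh :: "(nat \<Rightarrow> 'a set) \<Rightarrow> (nat \<Rightarrow> 'a) set set" where
  "hh f = psi (the_inv_into (carrier A) (adic_canon A I) f)"

lemma hh_canon:
  assumes sep: "adic_separated A I" and a: "a \<in> carrier A"
  shows "hh (canon a) = psi a"
  unfolding hh_def using the_inv_into_f_f[OF canon_inj[OF sep] a] by simp

lemma Ahat_elem:
  assumes comp: "adic_complete A I" and f: "f \<in> carrier Ahat"
  obtains a where "a \<in> carrier A" "f = canon a"
  using canon_surj[OF comp] f by blast

lemma hh_hom:
  assumes sep: "adic_separated A I" and comp: "adic_complete A I"
  shows "hh \<in> ring_hom Ahat Q"
proof (rule ring_hom_memI)
  fix f assume "f \<in> carrier Ahat"
  then obtain a where a: "a \<in> carrier A" "f = canon a" using Ahat_elem[OF comp] by blast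
  then show "hh f \<in> carrier Q" using hh_canon[OF sep] ring_hom_closed[OF psi_hom] by simp
next
  fix f g assume "f \<in> carrier Ahat" "g \<in> carrier Ahat"
  then obtain a b where a: "a \<in> carrier A" "f = canon a" and b: "b \<in> carrier A" "g = canon b"
    using Ahat_elem[OF comp] by metis
  have ab: "a \<otimes>\<^bsub>A\<^esub> b \<in> carrier A" "a \<oplus>\<^bsub>A\<^esub> b \<in> carrier A"
    using a b ring.ring_simprules[OF A_ring] by auto
  have "f \<otimes>\<^bsub>Ahat\<^esub> g = canon (a \<otimes>\<^bsub>A\<^esub> b)" using ring_hom_mult[OF canon_hom] a b by simp
  then show "hh (f \<otimes>\<^bsub>Ahat\<^esub> g) = hh f \<otimes>\<^bsub>Q\<^esub> hh g"
    using hh_canon[OF sep] ab a b ring_hom_mult[OF psi_hom] by simp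
  have "f \<oplus>\<^bsub>Ahat\<^esub> g = canon (a \<oplus>\<^bsub>A\<^esub> b)" using ring_hom_add[OF canon_hom] a b by simp
  then show "hh (f \<oplus>\<^bsub>Ahat\<^esub> g) = hh f \<oplus>\<^bsub>Q\<^esub> hh g"
    using hh_canon[OF sep] ab a b ring_hom_add[OF psi_hom] by simp
next
  have "\<one>\<^bsub>Ahat\<^esub> = canon \<one>\<^bsub>A\<^esub>" using ring_hom_one[OF canon_hom] by simp
  then show "hh \<one>\<^bsub>Ahat\<^esub> = \<one>\<^bsub>Q\<^esub>"
    using hh_canon[OF sep] ring_hom_one[OF psi_hom] ring.ring_simprules(6)[OF A_ring] by simp
qed

lemma hh_inj:
  assumes sep: "adic_separated A I" and comp: "adic_complete A I"
  shows "inj_on hh (carrier Ahat)"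
proof (rule inj_onI)
  fix f g assume "f \<in> carrier Ahat" "g \<in> carrier Ahat" and e: "hh f = hh g"
  then obtain a b where a: "a \<in> carrier A" "f = canon a" and b: "b \<in> carrier A" "g = canon b"
    using Ahat_elem[OF comp] by metis
  have "psi a = psi b" using e hh_canon[OF sep] a b by simp
  then show "f = g" using psi_eq_iff a b by simp
qed

lemma hh_image:
  assumes sep: "adic_separated A I" and comp: "adic_complete A I"
  shows "hh ` carrier Ahat = psi ` carrier A"
proof -
  have "hh ` carrier Ahat = hh ` canon ` carrier A" using canon_surj[OF comp] by simp
  also have "\<dots> = psi ` carrier A" using hh_canon[OF sep] by (auto simp: image_iff)
  finally show ?thesis .
qed

lemma psi_surj_iff:
  assumes sep: "adic_separated A I" and comp: "adic_complete A I"
  shows "psi ` carrier A = carrier Q \<longleftrightarrow> (\<forall>n. finite (carrier (A Quot Ip (Suc n))))"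
proof
  assume surj: "psi ` carrier A = carrier Q"
  show "\<forall>n. finite (carrier (A Quot Ip (Suc n)))"
  proof (rule ccontr)
    assume "\<not> (\<forall>n. finite (carrier (A Quot Ip (Suc n))))"
    then obtain n where inf: "infinite (carrier (A Quot Ip (Suc n)))" by blast
    then obtain g :: "nat \<Rightarrow> 'a set" where g: "inj g" "range g \<subseteq> carrier (A Quot Ip (Suc n))"
      using infinite_countable_subset by blast
    have "\<forall>k. \<exists>y. y \<in> carrier A \<and> g k = Ip (Suc n) +>\<^bsub>A\<^esub> y"
      using g(2) unfolding quot_carrier by blast
    then obtain x where x: "\<And>k. x k \<in> carrier A" and gx: "\<And>k. g k = Ip (Suc n) +>\<^bsub>A\<^esub> x k"
      by metis
    have xS: "x \<in> carrier S" using x by simp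
    have "M0 +>\<^bsub>P\<^esub> cls x \<in> carrier Q" unfolding Q_carrier using xS by blast
    then have "M0 +>\<^bsub>P\<^esub> cls x \<in> psi ` carrier A" using surj by simp
    then obtain a where a: "a \<in> carrier A" "M0 +>\<^bsub>P\<^esub> cls x = psi a" by blast
    have "M0 +>\<^bsub>P\<^esub> cls x = M0 +>\<^bsub>P\<^esub> cls (diag a)" using a(2) unfolding psi_def .
    then have "\<forall>m. eventually (\<lambda>k. x k \<ominus>\<^bsub>A\<^esub> diag a k \<in> Ip (Suc m)) U"
      using Q_eq[OF xS diag_carrier[OF a(1)]] by blast
    then have "\<forall>m. eventually (\<lambda>k. x k \<ominus>\<^bsub>A\<^esub> a \<in> Ip (Suc m)) U"
      unfolding diag_def .
    then have "eventually (\<lambda>k. x k \<ominus>\<^bsub>A\<^esub> a \<in> Ip (Suc n)) U" by blast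
    then have "eventually (\<lambda>k. k \<in> g -` {Ip (Suc n) +>\<^bsub>A\<^esub> a}) U"
    proof eventually_elim
      case (elim k) then show ?case using rcos_eq_iff[OF A_ring Ip_ideal x a(1)] gx by simp
    qed
    moreover have "finite (g -` {Ip (Suc n) +>\<^bsub>A\<^esub> a})" by (rule finite_vimageI[OF _ g(1)]) simp
    ultimately show False using U_free[of "g -` {Ip (Suc n) +>\<^bsub>A\<^esub> a}"] by simp
  qed
next
  assume fin: "\<forall>n. finite (carrier (A Quot Ip (Suc n)))"
  show "psi ` carrier A = carrier Q"
  proof
    show "psi ` carrier A \<subseteq> carrier Q" using ring_hom_closed[OF psi_hom] by blast
  next
    show "carrier Q \<subseteq> psi ` carrier A"
    proof
      fix z assume "z \<in> carrier Q"
      then obtain x where xS: "x \<in> carrier S" and z: "z = M0 +>\<^bsub>P\<^esub> cls x"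
        unfolding Q_carrier by blast
      have xA: "\<And>k. x k \<in> carrier A" using xS by simp
      have "\<forall>n. \<exists>c. c \<in> carrier (A Quot Ip (Suc n)) \<and>
              eventually (\<lambda>k. Ip (Suc n) +>\<^bsub>A\<^esub> x k = c) U"
      proof
        fix n
        have "eventually (\<lambda>k. Ip (Suc n) +>\<^bsub>A\<^esub> x k \<in> carrier (A Quot Ip (Suc n))) U"
          using xA unfolding quot_carrier by simp
        from ult_fin[OF fin[rule_format] fu this]
        show "\<exists>c. c \<in> carrier (A Quot Ip (Suc n)) \<and>
              eventually (\<lambda>k. Ip (Suc n) +>\<^bsub>A\<^esub> x k = c) U" by blast
      qed
      then obtain c where c: "\<And>n. c n \<in> carrier (A Quot Ip (Suc n))"
        and ce: "\<And>n. eventually (\<lambda>k. Ip (Suc n) +>\<^bsub>A\<^esub> x k = c n) U"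
        by metis
      have "c (Suc n) \<subseteq> c n" for n
      proof -
        have "eventually (\<lambda>k. Ip (Suc n) +>\<^bsub>A\<^esub> x k = c n \<and> Ip (Suc (Suc n)) +>\<^bsub>A\<^esub> x k = c (Suc n)) U"
          using ce[of n] ce[of "Suc n"] by (rule eventually_conj)
        then obtain k where k: "Ip (Suc n) +>\<^bsub>A\<^esub> x k = c n" "Ip (Suc (Suc n)) +>\<^bsub>A\<^esub> x k = c (Suc n)"
          using eventually_happens'[OF U_nbot] by blast
        show ?thesis using k rcos_mono[OF ideal_pow_Suc_sub[OF A_ring idl, of "Suc n"], of A "x k"] by simp
      qed
      then have "c \<in> carrier Ahat" using c unfolding Ahat_simps by blast
      then obtain a where a: "a \<in> carrier A" "c = canon a" using Ahat_elem[OF comp] by blast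
      have "eventually (\<lambda>k. x k \<ominus>\<^bsub>A\<^esub> a \<in> Ip (Suc n)) U" for n
        using ce[of n]
      proof eventually_elim
        case (elim k)
        then have "Ip (Suc n) +>\<^bsub>A\<^esub> x k = Ip (Suc n) +>\<^bsub>A\<^esub> a" using a unfolding canon_eq_def by simp
        then show ?case using rcos_eq_iff[OF A_ring Ip_ideal xA a(1)] by blast
      qed
      then have "\<forall>n. eventually (\<lambda>k. x k \<ominus>\<^bsub>A\<^esub> diag a k \<in> Ip (Suc n)) U"
        unfolding diag_def by blast
      then have "z = psi a"
        unfolding z psi_def using Q_eq[OF xS diag_carrier[OF a(1)]] by blast
      then show "z \<in> psi ` carrier A" using a by blast
    qed
  qed
qed

lemma main_ii_iii:
  assumes sep: "adic_separated A I" and comp: "adic_complete A I"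
  shows "\<exists>h. h \<in> ring_hom Ahat Q \<and> inj_on h (carrier Ahat)
             \<and> (\<forall>a\<in>carrier A. h (canon a) = M0 +>\<^bsub>P\<^esub> star_diag A U a)
             \<and> (h \<in> ring_iso Ahat Q \<longleftrightarrow> (\<forall>n. finite (carrier (A Quot Ip (Suc n)))))"
proof (intro exI conjI)
  show "hh \<in> ring_hom Ahat Q" by (rule hh_hom[OF sep comp])
  show "inj_on hh (carrier Ahat)" by (rule hh_inj[OF sep comp])
  show "\<forall>a\<in>carrier A. hh (canon a) = M0 +>\<^bsub>P\<^esub> star_diag A U a"
    using hh_canon[OF sep] psi_star_diag by simp
  have "hh \<in> ring_iso Ahat Q \<longleftrightarrow> hh ` carrier Ahat = carrier Q"
    unfolding ring_iso_def bij_betw_def using hh_hom[OF sep comp] hh_inj[OF sep comp] by blast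
  then show "hh \<in> ring_iso Ahat Q \<longleftrightarrow> (\<forall>n. finite (carrier (A Quot Ip (Suc n))))"
    using hh_image[OF sep comp] psi_surj_iff[OF sep comp] by simp
qed

lemma main_i: "coset_limit (\<lambda>n. ultrapower A U Quot star_set A U (ideal_pow A I (Suc n)))
           \<simeq> ultrapower A U Quot mu0 A U I"
  using part_i unfolding Jn_def star_def .

end

theorem corollary2p6p3:
  fixes A :: "('a, 'm) ring_scheme" and I :: "'a set" and U :: "nat filter"
  assumes "cring A" and "ideal I A"
    and "adic_separated A I" and "adic_complete A I"
    and "free_ultrafilter_nat U"
  shows "coset_limit (\<lambda>n. ultrapower A U Quot star_set A U (ideal_pow A I (Suc n)))
           \<simeq> ultrapower A U Quot mu0 A U I
       \<and> (\<exists>h. h \<in> ring_hom (adic_completion A I) (ultrapower A U Quot mu0 A U I)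
             \<and> inj_on h (carrier (adic_completion A I))
             \<and> (\<forall>a\<in>carrier A. h (adic_canon A I a)
                    = mu0 A U I +>\<^bsub>ultrapower A U\<^esub> star_diag A U a)
             \<and> (h \<in> ring_iso (adic_completion A I) (ultrapower A U Quot mu0 A U I)
                  \<longleftrightarrow> (\<forall>n. finite (carrier (A Quot ideal_pow A I (Suc n))))))"
proof -
  interpret UPI A U I
    by (rule UPI.intro[OF UP.intro UPI_axioms.intro]) (rule assms)+
  show ?thesis using main_i main_ii_iii[OF assms(3,4)] by blast
qed


end
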